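(* Every Fréchet–Urysohn topological group $G$ has the property (PS).
   Context: A topological group $G$ (with unit $e$) has property (PS) if for every sequence $(g_n)_{n\in\mathbb{N}}$ in $G$ converging to $e$ there are strictly increasing sequences $(m_k)$ and $(n_k)$ of natural numbers such that $g_{n_k}^{m_k}\to e$, where $g^m=g\cdots g$ ($m$ times). A space is Fréchet–Urysohn if whenever $x\in\overline{A}$ there is a sequence in $A$ converging to $x$. *)

theory Defs
  imports "HOL-Analysis.Analysis" "HOL-Algebra.Group"
begin

definition topological_group :: "('a, 'b) monoid_scheme \<Rightarrow> 'a topology \<Rightarrow> bool" where
  "topological_group G T \<longleftrightarrow>
     group G \<and> topspace T = carrier G \<and>
     continuous_map (prod_topology T T) T (\<lambda>(x, y). x \<otimes>\<^bsub>G\<^esub> y) \<and>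
     continuous_map T T (\<lambda>x. inv\<^bsub>G\<^esub> x)"

definition Frechet_Urysohn_space :: "'a topology \<Rightarrow> bool" where
  "Frechet_Urysohn_space T \<longleftrightarrow>
     (\<forall>A x. A \<subseteq> topspace T \<and> x \<in> T closure_of A \<longrightarrow>
        (\<exists>s. (\<forall>n. s n \<in> A) \<and> limitin T s x sequentially))"

definition property_PS :: "('a, 'b) monoid_scheme \<Rightarrow> 'a topology \<Rightarrow> bool" where
  "property_PS G T \<longleftrightarrow>
     (\<forall>g. (\<forall>n. g n \<in> carrier G) \<and> limitin T g \<one>\<^bsub>G\<^esub> sequentially \<longrightarrow>
        (\<exists>m k. strict_mono (m :: nat \<Rightarrow> nat) \<and> strict_mono (k :: nat \<Rightarrow> nat) \<and>
           limitin T (\<lambda>i. g (k i) [^]\<^bsub>G\<^esub> m i) \<one>\<^bsub>G\<^esub> sequentially))"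

end

theory Submission
  imports Defs
begin

lemma tg_mult_lim:
  assumes "topological_group G T" "limitin T a x F" "limitin T b y F"
  shows "limitin T (\<lambda>i. a i \<otimes>\<^bsub>G\<^esub> b i) (x \<otimes>\<^bsub>G\<^esub> y) F"
proof -
  have c: "continuous_map (prod_topology T T) T (\<lambda>(x, y). x \<otimes>\<^bsub>G\<^esub> y)"
    using assms(1) by (simp add: topological_group_def)
  have "limitin (prod_topology T T) (\<lambda>i. (a i, b i)) (x, y) F"
    using assms(2,3) by (simp add: limitin_pairwise o_def)
  from continuous_map_limit[OF c this] show ?thesis by (simp add: o_def)
qed

lemma tg_inv_lim:
  assumes "topological_group G T" "limitin T a x F"
  shows "limitin T (\<lambda>i. inv\<^bsub>G\<^esub> (a i)) (inv\<^bsub>G\<^esub> x) F"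
proof -
  have c: "continuous_map T T (\<lambda>x. inv\<^bsub>G\<^esub> x)"
    using assms(1) by (simp add: topological_group_def)
  from continuous_map_limit[OF c assms(2)] show ?thesis by (simp add: o_def)
qed

lemma tg_pow_lim:
  assumes "topological_group G T" "limitin T a \<one>\<^bsub>G\<^esub> F"
  shows "limitin T (\<lambda>i. a i [^]\<^bsub>G\<^esub> (m::nat)) \<one>\<^bsub>G\<^esub> F"
proof (induction m)
  case 0
  then show ?case using limitin_topspace[OF assms(2)] by simp
next
  case (Suc m)
  have grp: "group G" using assms(1) by (simp add: topological_group_def)
  have "limitin T (\<lambda>i. a i [^]\<^bsub>G\<^esub> m \<otimes>\<^bsub>G\<^esub> a i) (\<one>\<^bsub>G\<^esub> \<otimes>\<^bsub>G\<^esub> \<one>\<^bsub>G\<^esub>) F"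
    by (rule tg_mult_lim[OF assms(1) Suc assms(2)])
  then show ?case using grp by (simp add: group.is_monoid)
qed

lemma lim_reindex:
  assumes "limitin T g l sequentially" "\<And>B. finite {k. f k \<le> (B::nat)}"
  shows "limitin T (\<lambda>k. g (f k)) l sequentially"
  unfolding limitin_sequentially
proof (intro conjI allI impI)
  show "l \<in> topspace T" using limitin_topspace[OF assms(1)] .
  fix U assume U: "openin T U \<and> l \<in> U"
  then obtain K where K: "\<And>n. n \<ge> K \<Longrightarrow> g n \<in> U"
    using assms(1) unfolding limitin_sequentially by blast
  obtain B where B: "\<And>k. k \<in> {k. f k \<le> K} \<Longrightarrow> k \<le> B"
    using assms(2)[of K] unfolding finite_nat_set_iff_bounded_le by blast
  show "\<exists>N. \<forall>n\<ge>N. g (f n) \<in> U"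
  proof (intro exI allI impI)
    fix n assume "Suc B \<le> n"
    then have "\<not> f n \<le> K" using B by force
    then show "g (f n) \<in> U" using K by simp
  qed
qed

theorem mainTheorem11:
  fixes G :: "('a, 'b) monoid_scheme" and T :: "'a topology"
  assumes "topological_group G T"
    and "Frechet_Urysohn_space T"
  shows "property_PS G T"
proof -
  have grp: "group G" and top: "topspace T = carrier G"
    using assms(1) by (auto simp: topological_group_def)
  interpret G: group G by (rule grp)
  note tg = assms(1)
  show ?thesis unfolding property_PS_def
  proof (intro allI impI)
    fix g assume gh: "(\<forall>n. g n \<in> carrier G) \<and> limitin T g \<one>\<^bsub>G\<^esub> sequentially"
    hence gc: "\<And>n. g n \<in> carrier G" and gl: "limitin T g \<one>\<^bsub>G\<^esub> sequentially" by auto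
    have one_top: "\<one>\<^bsub>G\<^esub> \<in> topspace T" using top by simp
    define P where "P x \<longleftrightarrow> (\<forall>U. openin T U \<and> \<one>\<^bsub>G\<^esub> \<in> U \<longrightarrow> x \<in> U)" for x
    have Pconst: "\<And>x. limitin T (\<lambda>_. x) \<one>\<^bsub>G\<^esub> sequentially \<longleftrightarrow> P x"
      by (simp add: limitin_def P_def one_top)
    have Plim: "\<And>f. (\<And>i. P (f i)) \<Longrightarrow> limitin T f \<one>\<^bsub>G\<^esub> sequentially"
      by (simp add: limitin_def P_def one_top)
    show "\<exists>m k. strict_mono (m :: nat \<Rightarrow> nat) \<and> strict_mono (k :: nat \<Rightarrow> nat) \<and>
           limitin T (\<lambda>i. g (k i) [^]\<^bsub>G\<^esub> m i) \<one>\<^bsub>G\<^esub> sequentially"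
    proof (cases "finite {n. P (g n)}")
      case False
      define k where "k = enumerate {n. P (g n)}"
      have km: "strict_mono k" using strict_mono_enumerate[OF False] by (simp add: k_def)
      have Pk: "P (g (k i))" for i using enumerate_in_set[OF False] by (simp add: k_def)
      have "P (g (k i) [^]\<^bsub>G\<^esub> i)" for i
      proof -
        have "limitin T (\<lambda>_. g (k i)) \<one>\<^bsub>G\<^esub> sequentially" using Pk Pconst by blast
        from tg_pow_lim[OF tg this, of i] show ?thesis using Pconst by blast
      qed
      then have "limitin T (\<lambda>i. g (k i) [^]\<^bsub>G\<^esub> i) \<one>\<^bsub>G\<^esub> sequentially" by (rule Plim)
      moreover have "strict_mono (\<lambda>i::nat. i)" by (simp add: strict_mono_def)
      ultimately show ?thesis using km by blast
    next
      case True
      then obtain b where b: "\<And>n. P (g n) \<Longrightarrow> n \<le> b"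
        unfolding finite_nat_set_iff_bounded_le by blast
      define n0 where "n0 = Suc b"
      have n0: "\<And>n. n \<ge> n0 \<Longrightarrow> \<not> P (g n)" using b n0_def by force
      define y where "y n m = g n [^]\<^bsub>G\<^esub> m \<otimes>\<^bsub>G\<^esub> g m" for n m :: nat
      have yc: "y n m \<in> carrier G" for n m by (simp add: y_def gc)
      define A where "A = {y n m | n m. n0 \<le> m \<and> m < n \<and> \<not> P (y n m)}"
      have Asub: "A \<subseteq> topspace T" using yc top A_def by auto
      have "\<one>\<^bsub>G\<^esub> \<in> T closure_of A"
        unfolding in_closure_of
      proof (intro conjI allI impI)
        show "\<one>\<^bsub>G\<^esub> \<in> topspace T" by (rule one_top)
        fix U assume U: "\<one>\<^bsub>G\<^esub> \<in> U \<and> openin T U"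
        then obtain K where K: "\<And>n. n \<ge> K \<Longrightarrow> g n \<in> U"
          using gl unfolding limitin_sequentially by blast
        define m where "m = max K n0"
        have mn0: "m \<ge> n0" and gmU: "g m \<in> U" using K by (auto simp: m_def)
        have "limitin T (\<lambda>n. y n m) (\<one>\<^bsub>G\<^esub> \<otimes>\<^bsub>G\<^esub> g m) sequentially"
          unfolding y_def
          by (rule tg_mult_lim[OF tg tg_pow_lim[OF tg gl]]) (simp add: top gc)
        then have ylim: "limitin T (\<lambda>n. y n m) (g m) sequentially" using gc by simp
        have ev1: "eventually (\<lambda>n. y n m \<in> U) sequentially"
          using ylim U gmU by (simp add: limitin_def)
        have ev2: "eventually (\<lambda>n. \<not> P (y n m)) sequentially"
        proof (rule ccontr)
          assume "\<not> eventually (\<lambda>n. \<not> P (y n m)) sequentially"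
          then have "frequently (\<lambda>n. P (y n m)) sequentially" by (simp add: not_eventually)
          then have "\<forall>N. \<exists>n\<ge>N. P (y n m)" by (simp add: frequently_sequentially)
          then obtain \<phi> where \<phi>: "\<And>N. \<phi> N \<ge> N \<and> P (y (\<phi> N) m)" by metis
          have g\<phi>: "limitin T (\<lambda>N. g (\<phi> N)) \<one>\<^bsub>G\<^esub> sequentially"
            unfolding limitin_sequentially
          proof (intro conjI allI impI)
            show "\<one>\<^bsub>G\<^esub> \<in> topspace T" by (rule one_top)
            fix V assume "openin T V \<and> \<one>\<^bsub>G\<^esub> \<in> V"
            then obtain K where K: "\<And>n. n \<ge> K \<Longrightarrow> g n \<in> V"
              using gl unfolding limitin_sequentially by blast
            show "\<exists>N. \<forall>n\<ge>N. g (\<phi> n) \<in> V"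
              using K \<phi> order_trans by blast
          qed
          have y\<phi>: "limitin T (\<lambda>N. y (\<phi> N) m) \<one>\<^bsub>G\<^esub> sequentially"
            by (rule Plim) (use \<phi> in blast)
          have "limitin T (\<lambda>N. inv\<^bsub>G\<^esub> (g (\<phi> N) [^]\<^bsub>G\<^esub> m) \<otimes>\<^bsub>G\<^esub> y (\<phi> N) m)
                  (inv\<^bsub>G\<^esub> \<one>\<^bsub>G\<^esub> \<otimes>\<^bsub>G\<^esub> \<one>\<^bsub>G\<^esub>) sequentially"
            by (rule tg_mult_lim[OF tg tg_inv_lim[OF tg tg_pow_lim[OF tg g\<phi>]] y\<phi>])
          moreover have "inv\<^bsub>G\<^esub> (g (\<phi> N) [^]\<^bsub>G\<^esub> m) \<otimes>\<^bsub>G\<^esub> y (\<phi> N) m = g m" for N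
            unfolding y_def by (metis G.inv_closed G.l_inv G.l_one G.m_assoc G.nat_pow_closed gc)
          ultimately have "limitin T (\<lambda>_. g m) \<one>\<^bsub>G\<^esub> sequentially" by simp
          then have "P (g m)" using Pconst by blast
          then show False using n0 mn0 by blast
        qed
        have ev3: "eventually (\<lambda>n. m < n) sequentially" by (rule eventually_gt_at_top)
        from ev1 ev2 ev3 have "eventually (\<lambda>n. y n m \<in> U \<and> \<not> P (y n m) \<and> m < n) sequentially"
          by (simp add: eventually_conj_iff)
        then obtain n where "y n m \<in> U" "\<not> P (y n m)" "m < n"
          unfolding eventually_sequentially by blast
        then show "\<exists>y. y \<in> A \<and> y \<in> U" using mn0 unfolding A_def by blast
      qed
      then obtain s where sA: "\<And>k. s k \<in> A" and sl: "limitin T s \<one>\<^bsub>G\<^esub> sequentially"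
        using assms(2) Asub unfolding Frechet_Urysohn_space_def by blast
      have "\<forall>k. \<exists>p. s k = y (fst p) (snd p) \<and> n0 \<le> snd p \<and> snd p < fst p \<and> \<not> P (s k)"
      proof
        fix k
        from sA[of k] obtain n m where "s k = y n m" "n0 \<le> m" "m < n" "\<not> P (y n m)"
          unfolding A_def by blast
        then show "\<exists>p. s k = y (fst p) (snd p) \<and> n0 \<le> snd p \<and> snd p < fst p \<and> \<not> P (s k)"
          by (intro exI[of _ "(n, m)"]) simp
      qed
      then obtain pp where pp: "\<And>k. s k = y (fst (pp k)) (snd (pp k)) \<and> n0 \<le> snd (pp k) \<and> snd (pp k) < fst (pp k) \<and> \<not> P (s k)"
        by metis
      define N where "N k = fst (pp k)" for k
      define M where "M k = snd (pp k)" for k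
      have NM: "\<And>k. s k = y (N k) (M k) \<and> n0 \<le> M k \<and> M k < N k \<and> \<not> P (s k)"
        unfolding N_def M_def by (rule pp)
      have finconst: "finite {k. s k = a}" if nP: "\<not> P a" for a
      proof (rule ccontr)
        assume inf: "infinite {k. s k = a}"
        have "P a" unfolding P_def
        proof (intro allI impI)
          fix U assume U: "openin T U \<and> \<one>\<^bsub>G\<^esub> \<in> U"
          then obtain K where K: "\<And>n. n \<ge> K \<Longrightarrow> s n \<in> U"
            using sl unfolding limitin_sequentially by blast
          obtain k where "k \<ge> K" "s k = a"
            using inf unfolding infinite_nat_iff_unbounded_le by blast
          then show "a \<in> U" using K by blast
        qed
        then show False using nP by blast
      qed
      have Nfin: "finite {k. N k \<le> B}" for B
      proof -
        let ?Y = "(\<lambda>(n,m). y n m) ` ({..B} \<times> {..B})"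
        have "{k. N k \<le> B} \<subseteq> (\<Union>a \<in> ?Y \<inter> {a. \<not> P a}. {k. s k = a})"
        proof
          fix k assume "k \<in> {k. N k \<le> B}"
          then have "N k \<le> B" "M k \<le> B" using NM[of k] by auto
          then have "s k \<in> ?Y" using NM[of k] by force
          then show "k \<in> (\<Union>a \<in> ?Y \<inter> {a. \<not> P a}. {k. s k = a})" using NM[of k] by blast
        qed
        moreover have "finite (\<Union>a \<in> ?Y \<inter> {a. \<not> P a}. {k. s k = a})"
          using finconst by auto
        ultimately show ?thesis by (rule finite_subset)
      qed
      have Mfin: "finite {k. M k = m}" for m
      proof (rule ccontr)
        assume inf: "infinite {k. M k = m}"
        define \<psi> where "\<psi> = enumerate {k. M k = m}"
        have \<psi>m: "strict_mono \<psi>" using strict_mono_enumerate[OF inf] \<psi>_def by simp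
        have M\<psi>: "M (\<psi> i) = m" for i using enumerate_in_set[OF inf] \<psi>_def by simp
        have mn0: "n0 \<le> m" using NM[of "\<psi> 0"] M\<psi>[of 0] by simp
        have s\<psi>: "limitin T (\<lambda>i. s (\<psi> i)) \<one>\<^bsub>G\<^esub> sequentially"
          using limitin_subsequence[OF \<psi>m sl] by (simp add: o_def)
        have inj\<psi>: "inj \<psi>" using \<psi>m by (rule strict_mono_imp_inj_on)
        have "finite {i. N (\<psi> i) \<le> B}" for B
        proof -
          have "{i. N (\<psi> i) \<le> B} = \<psi> -` {k. N k \<le> B}" by auto
          then show ?thesis using finite_vimageI[OF Nfin inj\<psi>] by simp
        qed
        then have gN: "limitin T (\<lambda>i. g (N (\<psi> i))) \<one>\<^bsub>G\<^esub> sequentially"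
          by (rule lim_reindex[OF gl])
        have "limitin T (\<lambda>i. inv\<^bsub>G\<^esub> (g (N (\<psi> i)) [^]\<^bsub>G\<^esub> m) \<otimes>\<^bsub>G\<^esub> s (\<psi> i))
                (inv\<^bsub>G\<^esub> \<one>\<^bsub>G\<^esub> \<otimes>\<^bsub>G\<^esub> \<one>\<^bsub>G\<^esub>) sequentially"
          by (rule tg_mult_lim[OF tg tg_inv_lim[OF tg tg_pow_lim[OF tg gN]] s\<psi>])
        moreover have "inv\<^bsub>G\<^esub> (g (N (\<psi> i)) [^]\<^bsub>G\<^esub> m) \<otimes>\<^bsub>G\<^esub> s (\<psi> i) = g m" for i
        proof -
          have "s (\<psi> i) = g (N (\<psi> i)) [^]\<^bsub>G\<^esub> m \<otimes>\<^bsub>G\<^esub> g m"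
            using NM[of "\<psi> i"] M\<psi>[of i] by (simp add: y_def)
          then show ?thesis by (metis G.inv_closed G.l_inv G.l_one G.m_assoc G.nat_pow_closed gc)
        qed
        ultimately have "limitin T (\<lambda>_. g m) \<one>\<^bsub>G\<^esub> sequentially" by simp
        then show False using Pconst n0 mn0 by blast
      qed
      have Mbig: "finite {k. M k \<le> B}" for B
      proof -
        have "{k. M k \<le> B} = (\<Union>m \<in> {..B}. {k. M k = m})" by auto
        then show ?thesis using Mfin by simp
      qed
      have ex: "\<exists>j. p < j \<and> M p < M j \<and> N p < N j" for p
      proof -
        let ?c = "max p (max (M p) (N p))"
        obtain b1 where b1: "\<And>k. k \<in> {k. M k \<le> ?c} \<Longrightarrow> k \<le> b1"
          using Mbig[of ?c] unfolding finite_nat_set_iff_bounded_le by blast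
        obtain b2 where b2: "\<And>k. k \<in> {k. N k \<le> ?c} \<Longrightarrow> k \<le> b2"
          using Nfin[of ?c] unfolding finite_nat_set_iff_bounded_le by blast
        let ?j = "Suc (max p (max b1 b2))"
        have "\<not> M ?j \<le> ?c" using b1 by force
        moreover have "\<not> N ?j \<le> ?c" using b2 by force
        ultimately show ?thesis by (intro exI[of _ ?j] conjI) (auto simp: max_def not_le split: if_splits)
      qed
      define \<phi> where "\<phi> = rec_nat 0 (\<lambda>_ p. SOME j. p < j \<and> M p < M j \<and> N p < N j)"
      have \<phi>S: "\<phi> i < \<phi> (Suc i) \<and> M (\<phi> i) < M (\<phi> (Suc i)) \<and> N (\<phi> i) < N (\<phi> (Suc i))" for i
      proof -
        have "\<phi> (Suc i) = (SOME j. \<phi> i < j \<and> M (\<phi> i) < M j \<and> N (\<phi> i) < N j)"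
          by (simp add: \<phi>_def)
        then show ?thesis using someI_ex[OF ex[of "\<phi> i"]] by simp
      qed
      have \<phi>m: "strict_mono \<phi>" "strict_mono (\<lambda>i. M (\<phi> i))" "strict_mono (\<lambda>i. N (\<phi> i))"
        using \<phi>S by (auto simp: strict_mono_Suc_iff)
      have s\<phi>: "limitin T (\<lambda>i. s (\<phi> i)) \<one>\<^bsub>G\<^esub> sequentially"
        using limitin_subsequence[OF \<phi>m(1) sl] by (simp add: o_def)
      have inj\<phi>: "inj \<phi>" using \<phi>m(1) by (rule strict_mono_imp_inj_on)
      have "finite {i. M (\<phi> i) \<le> B}" for B
      proof -
        have "{i. M (\<phi> i) \<le> B} = \<phi> -` {k. M k \<le> B}" by auto
        then show ?thesis using finite_vimageI[OF Mbig inj\<phi>] by simp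
      qed
      then have gM: "limitin T (\<lambda>i. g (M (\<phi> i))) \<one>\<^bsub>G\<^esub> sequentially"
        by (rule lim_reindex[OF gl])
      have "limitin T (\<lambda>i. s (\<phi> i) \<otimes>\<^bsub>G\<^esub> inv\<^bsub>G\<^esub> (g (M (\<phi> i))))
              (\<one>\<^bsub>G\<^esub> \<otimes>\<^bsub>G\<^esub> inv\<^bsub>G\<^esub> \<one>\<^bsub>G\<^esub>) sequentially"
        by (rule tg_mult_lim[OF tg s\<phi> tg_inv_lim[OF tg gM]])
      moreover have "s (\<phi> i) \<otimes>\<^bsub>G\<^esub> inv\<^bsub>G\<^esub> (g (M (\<phi> i))) = g (N (\<phi> i)) [^]\<^bsub>G\<^esub> M (\<phi> i)" for i
      proof -
        have "s (\<phi> i) = g (N (\<phi> i)) [^]\<^bsub>G\<^esub> M (\<phi> i) \<otimes>\<^bsub>G\<^esub> g (M (\<phi> i))"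
          using NM[of "\<phi> i"] by (simp add: y_def)
        then show ?thesis by (metis G.inv_closed G.r_inv G.r_one G.m_assoc G.nat_pow_closed gc)
      qed
      ultimately have L: "limitin T (\<lambda>i. g (N (\<phi> i)) [^]\<^bsub>G\<^esub> M (\<phi> i)) \<one>\<^bsub>G\<^esub> sequentially"
        by simp
      show ?thesis using \<phi>m(2,3) L by blast
    qed
  qed
qed

end
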